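(* Let $F:\mathbb{R}^n\rightrightarrows\mathbb{R}^n$ be a (possibly multi-valued) mapping. Consider the discrete-time system with state $x_t\in\mathbb{R}^n$, input $u_t\in\mathbb{R}^n$ and output $y_t\in\mathbb{R}^n$ given by $$x_{t+1}=x_t+u_t,\qquad y_t\in F(x_t+u_t),\qquad t\in\mathbb{N}_0 .$$ Then $F$ has a convex primitive, i.e. there exists a convex function $f:\mathbb{R}^n\to\mathbb{R}$ with $F(x)\subset\partial f(x)$ for all $x\in\mathbb{R}^n$, if and only if this system is passive.
   Context: A trajectory $t\mapsto(x_t,u_t,y_t)$, $t\in\mathbb{N}_0$, is admissible if $x_{t+1}=x_t+u_t$ and $y_t\in F(x_t+u_t)$ for all $t\in\mathbb{N}_0$. The system is passive if there exists a storage function $V:\mathbb{R}^n\to\mathbb{R}$ (which is not required to be nonnegative or bounded from below) such that $V(x_{t_2})\le V(x_{t_1})+\sum_{t=t_1}^{t_2-1}u_t^\top y_t$ for all admissible trajectories and all $t_1,t_2\in\mathbb{N}_0$ with $t_1\le t_2$. $\partial f$ denotes the subdifferential of the convex function $f$. *)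

theory Defs
  imports "HOL-Analysis.Analysis"
begin

definition subdiff :: "('a::euclidean_space \<Rightarrow> real) \<Rightarrow> 'a \<Rightarrow> 'a set" where
  "subdiff f x = {g. \<forall>z. f z \<ge> f x + inner g (z - x)}"

definition admissible ::
  "('a::euclidean_space \<Rightarrow> 'a set) \<Rightarrow> (nat \<Rightarrow> 'a) \<Rightarrow> (nat \<Rightarrow> 'a) \<Rightarrow> (nat \<Rightarrow> 'a) \<Rightarrow> bool" where
  "admissible F x u y \<longleftrightarrow> (\<forall>t. x (Suc t) = x t + u t \<and> y t \<in> F (x t + u t))"

text \<open>Passivity: existence of a real-valued storage function (no sign requirement).\<close>
definition passive_system :: "('a::euclidean_space \<Rightarrow> 'a set) \<Rightarrow> bool" where
  "passive_system F \<longleftrightarrow> (\<exists>V :: 'a \<Rightarrow> real. \<forall>x u y. admissible F x u y \<longrightarrow>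
     (\<forall>t1 t2. t1 \<le> t2 \<longrightarrow> V (x t2) \<le> V (x t1) + (\<Sum>t\<in>{t1..<t2}. inner (u t) (y t))))"

end

theory Submission
  imports Defs
begin

lemma fwd:
  fixes F :: "real ^ 'n \<Rightarrow> (real ^ 'n) set"
  assumes sub: "\<forall>x. F x \<subseteq> subdiff f x"
  shows "passive_system F"
  unfolding passive_system_def
proof (intro exI[of _ f] allI impI)
  fix x u y and t1 t2 :: nat
  assume adm: "admissible F x u y"
  show "t1 \<le> t2 \<Longrightarrow> f (x t2) \<le> f (x t1) + (\<Sum>t\<in>{t1..<t2}. inner (u t) (y t))"
  proof (induction t2 rule: dec_induct)
    case base then show ?case by simp
  next
    case (step m)
    have xs: "x (Suc m) = x m + u m" and ym: "y m \<in> F (x m + u m)"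
      using adm unfolding admissible_def by auto
    then have "y m \<in> subdiff f (x (Suc m))" using sub by auto
    then have "f (x m) \<ge> f (x (Suc m)) + inner (y m) (x m - x (Suc m))"
      unfolding subdiff_def by blast
    moreover have "inner (y m) (x m - x (Suc m)) = - inner (u m) (y m)"
      using xs by (simp add: inner_commute)
    ultimately have "f (x (Suc m)) \<le> f (x m) + inner (u m) (y m)" by linarith
    then show ?case using step by simp
  qed
qed

lemma bwd:
  fixes F :: "real ^ 'n \<Rightarrow> (real ^ 'n) set"
  assumes "passive_system F"
  shows "\<exists>f :: real ^ 'n \<Rightarrow> real. convex_on UNIV f \<and> (\<forall>x. F x \<subseteq> subdiff f x)"
proof -
  obtain V :: "real ^ 'n \<Rightarrow> real" where V: "\<And>x u y t1 t2. admissible F x u y \<Longrightarrow> t1 \<le> t2 \<Longrightarrow>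
     V (x t2) \<le> V (x t1) + (\<Sum>t\<in>{t1..<t2}. inner (u t) (y t))"
    using assms unfolding passive_system_def by blast
  have key: "V z \<ge> V a + inner g (z - a)" if g: "g \<in> F a" for z a g
  proof -
    define x where "x = (\<lambda>t::nat. if t = 0 then z else a)"
    define u where "u = (\<lambda>t::nat. if t = 0 then a - z else 0)"
    define y where "y = (\<lambda>t::nat. g)"
    have "admissible F x u y" unfolding admissible_def x_def u_def y_def using g by auto
    from V[OF this, of 0 1] have "V a \<le> V z + inner (a - z) g" by (simp add: x_def u_def y_def)
    moreover have "inner (a - z) g = - inner g (z - a)"
      by (metis inner_commute inner_minus_right minus_diff_eq)
    ultimately show ?thesis by linarith
  qed
  show ?thesis
  proof (cases "\<exists>a. F a \<noteq> {}")
    case False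
    then show ?thesis by (intro exI[of _ "\<lambda>_. 0"]) (auto simp: convex_on_const)
  next
    case True
    define S where "S = (\<lambda>z. {V a + inner g (z - a) | a g. g \<in> F a})"
    define f where "f = (\<lambda>z. Sup (S z))"
    have f_eq: "f z = Sup (S z)" for z by (simp add: f_def)
    have ne: "S z \<noteq> {}" for z using True unfolding S_def by auto
    have bdd: "\<And>w. w \<in> S z \<Longrightarrow> w \<le> V z" for z unfolding S_def using key by auto
    have upper: "V a + inner g (z - a) \<le> f z" if "g \<in> F a" for a g z
      proof -
      have "bdd_above (S z)" using bdd[of _ z] by (auto simp: bdd_above_def)
      moreover have "V a + inner g (z - a) \<in> S z" using that unfolding S_def by auto
      ultimately show ?thesis unfolding f_def by (rule cSup_upper[rotated])
    qed
    have le: "f z \<le> V z" for z unfolding f_def by (rule cSup_least[OF ne bdd])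
    have "convex_on UNIV f"
    proof (rule convex_onI)
      show "convex (UNIV :: (real ^ 'n) set)" by simp
    next
      fix t :: real and p q :: "real ^ 'n"
      assume t: "0 < t" "t < 1"
      show "f ((1 - t) *\<^sub>R p + t *\<^sub>R q) \<le> (1 - t) * f p + t * f q"
        unfolding f_eq[of "(1 - t) *\<^sub>R p + t *\<^sub>R q"]
      proof (rule cSup_least[OF ne])
        fix w assume "w \<in> S ((1 - t) *\<^sub>R p + t *\<^sub>R q)"
        then obtain a g where g: "g \<in> F a" and w: "w = V a + inner g ((1 - t) *\<^sub>R p + t *\<^sub>R q - a)"
          unfolding S_def by auto
        have "w = (1 - t) * (V a + inner g (p - a)) + t * (V a + inner g (q - a))"
          unfolding w by (simp add: inner_diff_right inner_add_right algebra_simps)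
        also have "\<dots> \<le> (1 - t) * f p + t * f q"
          using upper[OF g, of p] upper[OF g, of q] t
          by (intro add_mono mult_left_mono) auto
        finally show "w \<le> (1 - t) * f p + t * f q" .
      qed
    qed
    moreover have "F x \<subseteq> subdiff f x" for x
    proof
      fix g assume g: "g \<in> F x"
      have "f z \<ge> f x + inner g (z - x)" for z
        using upper[OF g, of z] le[of x] by linarith
      then show "g \<in> subdiff f x" unfolding subdiff_def by blast
    qed
    ultimately show ?thesis by blast
  qed
qed

theorem theorem3:
  fixes F :: "real ^ 'n \<Rightarrow> (real ^ 'n) set"
  shows "(\<exists>f :: real ^ 'n \<Rightarrow> real. convex_on UNIV f \<and> (\<forall>x. F x \<subseteq> subdiff f x))
         \<longleftrightarrow> passive_system F"
  using fwd bwd by metis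

end
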